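(* Assume Conditions (A), (P) and (Ah) from the context and let $\tau>0$. With $S_{h,\tau}=(I+\tau A_{h,2})^{-1}(I+\tau A_{h,1})^{-1}(I+\tau^2A_{h,1}A_{h,2})$, for every $n\in\mathbb N$, \[\|S_{h,\tau}^n(I+\tau A_{h,2})^{-1}\|_{\mathcal L(H)}\le1.\]
   Context: $(H,(\cdot,\cdot)_H,\|\cdot\|_H)$ is a real Hilbert space with complexification $H_{\mathbb C}$; $C$ denotes generic constants independent of $h$. Condition (A): $A:\mathrm{dom}(A)\subset H\to H$ and $A_\ell:\mathrm{dom}(A_\ell)\subset H\to H$ ($\ell=1,2$) are linear with $A=A_1+A_2$ on $\mathrm{dom}(A_1)\cap\mathrm{dom}(A_2)\subseteq\mathrm{dom}(A)$; $A$ is densely defined, positive and sectorial: there is $\varphi\in(0,\pi/2)$ such that $0$ and $S_\varphi=\{\lambda\in\mathbb C:\varphi<|\arg\lambda|\le\pi\}$ lie in the resolvent set and $\|(A-\lambda I)^{-1}\|_{\mathcal L(H_{\mathbb C})}\le C/|\lambda|$ on $S_\varphi$; $A_\ell A^{-1}$ is a well-defined bounded operator on $H$. Condition (P): $V_h\subset H$ ($h\in I\subset(0,\infty)$) are finite-dimensional subspaces and $P_h:H\to V_h$ bounded projections with $\|(I-P_h)v\|_H\le Ch^2\|Av\|_H$ for $v\in\mathrm{dom}(A)$. Condition (Ah): $V_h$ carries an inner product with norm $\|\cdot\|_{V_h}$, $\|v_h\|_H\le C\|v_h\|_{V_h}$, and $A_h,A_{h,1},A_{h,2}\in\mathcal L(V_h)$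 satisfy for all $v_h,w_h\in V_h$, $\ell=1,2$: (a) $(A_hv_h,v_h)_H\ge C\|v_h\|^2_{V_h}$; (b) $|(A_hv_h,w_h)_H|\le C\|v_h\|_{V_h}\|w_h\|_{V_h}$; (c) $A_h=A_{h,1}+A_{h,2}$; (d) $(A_{h,\ell}v_h,v_h)_H\ge0$; (e) $\|A_{h,\ell}P_h\|_{\mathcal L(H)}\le Ch^{-2}$; (f) $\|(P_hA_\ell-A_{h,\ell}P_h)v\|_H\le C\|Av\|_H$ for $v\in\mathrm{dom}(A)$; (g) $\|A^{-1}-A_h^{-1}P_h\|_{\mathcal L(H)}\le Ch^2$. Operators on $V_h$ are measured in the operator norm of $(V_h,\|\cdot\|_H)$ (equivalently, composed with $P_h$, as operators on $H$). *)

theory Defs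
  imports "HOL-Analysis.Analysis"
begin

definition lin_op :: "'a::real_vector set \<Rightarrow> ('a \<Rightarrow> 'a) \<Rightarrow> bool" where
  "lin_op D T \<longleftrightarrow> subspace D \<and>
     (\<forall>x\<in>D. \<forall>y\<in>D. T (x + y) = T x + T y) \<and>
     (\<forall>c. \<forall>x\<in>D. T (c *\<^sub>R x) = c *\<^sub>R T x)"

text \<open>Complexification H_C = H + iH with norm sqrt(|x|^2+|y|^2).
  For lambda = a + i b, the operator A - lambda I acts on x + i y in dom(A) + i dom(A) as
  (A x - a x + b y) + i (A y - a y - b x).
  lambda is in the resolvent set with resolvent bound K iff A - lambda I is a bijection
  from dom(A)+i dom(A) onto H_C and the inverse satisfies |(A - lambda I)^{-1}| <= K.\<close>
definition cplx_res_bound ::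
  "'a::real_inner set \<Rightarrow> ('a \<Rightarrow> 'a) \<Rightarrow> complex \<Rightarrow> real \<Rightarrow> bool" where
  "cplx_res_bound D A z K \<longleftrightarrow>
     (\<forall>f g. \<exists>!(x, y). x \<in> D \<and> y \<in> D \<and>
              A x - Re z *\<^sub>R x + Im z *\<^sub>R y = f \<and>
              A y - Re z *\<^sub>R y - Im z *\<^sub>R x = g) \<and>
     (\<forall>f g x y. x \<in> D \<and> y \<in> D \<and>
              A x - Re z *\<^sub>R x + Im z *\<^sub>R y = f \<and>
              A y - Re z *\<^sub>R y - Im z *\<^sub>R x = g \<longrightarrow>
              sqrt ((norm x)\<^sup>2 + (norm y)\<^sup>2) \<le> K * sqrt ((norm f)\<^sup>2 + (norm g)\<^sup>2))"

definition op_inv :: "'a set \<Rightarrow> ('a \<Rightarrow> 'a) \<Rightarrow> 'a \<Rightarrow> 'a" where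
  "op_inv D A = the_inv_into D A"

definition condA ::
  "'a::{real_inner,complete_space} set \<Rightarrow> ('a \<Rightarrow> 'a) \<Rightarrow> 'a set \<Rightarrow> ('a \<Rightarrow> 'a) \<Rightarrow>
   'a set \<Rightarrow> ('a \<Rightarrow> 'a) \<Rightarrow> bool" where
  "condA D A D1 A1 D2 A2 \<longleftrightarrow>
     lin_op D A \<and> lin_op D1 A1 \<and> lin_op D2 A2 \<and>
     D1 \<inter> D2 \<subseteq> D \<and> (\<forall>x\<in>D1 \<inter> D2. A x = A1 x + A2 x) \<and>
     closure D = UNIV \<and>
     (\<forall>x\<in>D. inner (A x) x \<ge> 0) \<and>
     \<comment> \<open>sectoriality\<close>
     (\<exists>\<phi> C. 0 < \<phi> \<and> \<phi> < pi / 2 \<and>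
        cplx_res_bound D A 0 C \<and>
        (\<forall>z. z \<noteq> 0 \<and> \<phi> < \<bar>Arg z\<bar> \<longrightarrow> cplx_res_bound D A z (C / cmod z))) \<and>
     \<comment> \<open>A_l A^{-1} well-defined and bounded on H\<close>
     (\<forall>x. op_inv D A x \<in> D1 \<and> op_inv D A x \<in> D2) \<and>
     bounded_linear (\<lambda>x. A1 (op_inv D A x)) \<and>
     bounded_linear (\<lambda>x. A2 (op_inv D A x))"

definition condP ::
  "real set \<Rightarrow> 'a::{real_inner,complete_space} set \<Rightarrow> ('a \<Rightarrow> 'a) \<Rightarrow>
   (real \<Rightarrow> 'a set) \<Rightarrow> (real \<Rightarrow> 'a \<Rightarrow> 'a) \<Rightarrow> bool" where
  "condP I D A V P \<longleftrightarrow>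
     I \<subseteq> {0<..} \<and>
     (\<forall>h\<in>I. subspace (V h) \<and> (\<exists>B. finite B \<and> span B = V h) \<and>
             bounded_linear (P h) \<and> (\<forall>x. P h x \<in> V h) \<and> (\<forall>v\<in>V h. P h v = v)) \<and>
     (\<exists>C. \<forall>h\<in>I. \<forall>v\<in>D. norm (v - P h v) \<le> C * h\<^sup>2 * norm (A v))"

definition lin_on :: "'a::real_vector set \<Rightarrow> ('a \<Rightarrow> 'a) \<Rightarrow> bool" where
  "lin_on V T \<longleftrightarrow> lin_op V T \<and> (\<forall>v\<in>V. T v \<in> V)"

definition condAh ::
  "real set \<Rightarrow> 'a::{real_inner,complete_space} set \<Rightarrow> ('a \<Rightarrow> 'a) \<Rightarrow>
   'a set \<Rightarrow> ('a \<Rightarrow> 'a) \<Rightarrow> 'a set \<Rightarrow> ('a \<Rightarrow> 'a) \<Rightarrow>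
   (real \<Rightarrow> 'a set) \<Rightarrow> (real \<Rightarrow> 'a \<Rightarrow> 'a) \<Rightarrow> (real \<Rightarrow> 'a \<Rightarrow> 'a \<Rightarrow> real) \<Rightarrow>
   (real \<Rightarrow> 'a \<Rightarrow> 'a) \<Rightarrow> (real \<Rightarrow> 'a \<Rightarrow> 'a) \<Rightarrow> (real \<Rightarrow> 'a \<Rightarrow> 'a) \<Rightarrow> bool" where
  "condAh I D A D1 A1 D2 A2 V P ip Ah Ah1 Ah2 \<longleftrightarrow>
     (\<forall>h\<in>I.
        (\<forall>v\<in>V h. \<forall>w\<in>V h. ip h v w = ip h w v) \<and>
        (\<forall>u\<in>V h. \<forall>v\<in>V h. \<forall>w\<in>V h. ip h (u + v) w = ip h u w + ip h v w) \<and>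
        (\<forall>c. \<forall>v\<in>V h. \<forall>w\<in>V h. ip h (c *\<^sub>R v) w = c * ip h v w) \<and>
        (\<forall>v\<in>V h. v \<noteq> 0 \<longrightarrow> ip h v v > 0) \<and>
        lin_on (V h) (Ah h) \<and> lin_on (V h) (Ah1 h) \<and> lin_on (V h) (Ah2 h)) \<and>
     (\<exists>C. \<forall>h\<in>I. \<forall>v\<in>V h. norm v \<le> C * sqrt (ip h v v)) \<and>
     \<comment> \<open>(a)\<close>
     (\<exists>C>0. \<forall>h\<in>I. \<forall>v\<in>V h. inner (Ah h v) v \<ge> C * ip h v v) \<and>
     \<comment> \<open>(b)\<close>
     (\<exists>C. \<forall>h\<in>I. \<forall>v\<in>V h. \<forall>w\<in>V h.
         \<bar>inner (Ah h v) w\<bar> \<le> C * sqrt (ip h v v) * sqrt (ip h w w)) \<and>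
     \<comment> \<open>(c), (d)\<close>
     (\<forall>h\<in>I. \<forall>v\<in>V h. Ah h v = Ah1 h v + Ah2 h v) \<and>
     (\<forall>h\<in>I. \<forall>v\<in>V h. inner (Ah1 h v) v \<ge> 0 \<and> inner (Ah2 h v) v \<ge> 0) \<and>
     \<comment> \<open>(e)\<close>
     (\<exists>C. \<forall>h\<in>I. \<forall>x. norm (Ah1 h (P h x)) \<le> C / h\<^sup>2 * norm x \<and>
                     norm (Ah2 h (P h x)) \<le> C / h\<^sup>2 * norm x) \<and>
     \<comment> \<open>(f)\<close>
     (\<exists>C. \<forall>h\<in>I. \<forall>v\<in>D. norm (P h (A1 v) - Ah1 h (P h v)) \<le> C * norm (A v) \<and>
                       norm (P h (A2 v) - Ah2 h (P h v)) \<le> C * norm (A v)) \<and>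
     \<comment> \<open>(g)\<close>
     (\<exists>C. \<forall>h\<in>I. \<forall>x. norm (op_inv D A x - op_inv (V h) (Ah h) (P h x)) \<le> C * h\<^sup>2 * norm x)"

definition shifted_inv :: "'a::real_vector set \<Rightarrow> real \<Rightarrow> ('a \<Rightarrow> 'a) \<Rightarrow> 'a \<Rightarrow> 'a" where
  "shifted_inv V \<tau> T = the_inv_into V (\<lambda>v. v + \<tau> *\<^sub>R T v)"

definition S_op :: "'a::real_vector set \<Rightarrow> real \<Rightarrow> ('a \<Rightarrow> 'a) \<Rightarrow> ('a \<Rightarrow> 'a) \<Rightarrow> 'a \<Rightarrow> 'a" where
  "S_op V \<tau> T1 T2 v =
     shifted_inv V \<tau> T2 (shifted_inv V \<tau> T1 (v + \<tau>\<^sup>2 *\<^sub>R T1 (T2 v)))"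

end

theory Submission imports Defs
begin
lemma surj_lin:
  fixes V :: "'a::real_vector set"
  assumes sub: "subspace V" and fin: "finite B0" "span B0 = V"
    and lin: "lin_op V f" and into: "\<forall>x\<in>V. f x \<in> V" and inj: "inj_on f V"
  shows "f ` V = V"
proof -
  obtain B where B: "B \<subseteq> V" "independent B" "V \<subseteq> span B" "card B = dim V"
    using basis_exists[of V] by blast
  have finB: "finite B" using independent_span_bound[of B0 B] fin B by auto
  have spB: "span B = V" using B sub span_minimal by blast
  obtain g where g: "linear g" "\<forall>x\<in>B. g x = f x"
    using linear_independent_extend[OF B(2)] by blast
  have f0: "f 0 = 0"
  proof -
    have "f (0 *\<^sub>R 0) = 0 *\<^sub>R f 0" using lin sub subspace_0[OF sub] unfolding lin_op_def by blast
    thus ?thesis by simp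
  qed
  have gf: "g x = f x" if "x \<in> V" for x
  proof -
    have "subspace {x\<in>V. g x = f x}"
      using sub lin g(1) unfolding subspace_def lin_op_def
      using f0 by (auto simp: linear_add linear_scale linear_0)
    hence "x \<in> {x\<in>V. g x = f x}"
      using span_induct[of x B "\<lambda>x. x \<in> {x\<in>V. g x = f x}"] that spB g(2) B(1) by auto
    thus ?thesis by auto
  qed
  have ginj: "inj_on g (span B)" using inj spB gf unfolding inj_on_def by auto
  have indep: "independent (g ` B)"
    using linear_independent_injective_image[OF g(1) B(2) ginj] .
  have gB: "g ` B = f ` B" using g(2) by auto
  have cardfB: "card (f ` B) = card B"
    by (rule card_image, rule inj_on_subset[OF inj B(1)])
  have "V \<subseteq> span (g ` B)"
  proof
    fix x assume x: "x \<in> V"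
    show "x \<in> span (g ` B)"
    proof (rule ccontr)
      assume nx: "x \<notin> span (g ` B)"
      have i2: "independent (insert x (g ` B))" using independent_insertI[OF nx indep] .
      have "insert x (g ` B) \<subseteq> span B" unfolding spB gB using x B(1) into by auto
      hence "card (insert x (g ` B)) \<le> card B"
        using independent_span_bound[OF finB i2] by auto
      moreover have "x \<notin> g ` B" using nx span_base by blast
      moreover have "card (insert x (g ` B)) = Suc (card (g ` B))"
        using finB by (intro card_insert_disjoint) (auto simp: \<open>x \<notin> g ` B\<close>)
      ultimately show False unfolding gB cardfB by (simp add: field_simps)
    qed
  qed
  hence "V \<subseteq> g ` span B" using linear_span_image[OF g(1), of B] by simp
  moreover have "g ` V = f ` V" by (rule image_cong) (auto simp: gf)
  ultimately have "V \<subseteq> f ` V" using spB by simp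
  thus ?thesis using into by auto
qed

lemma aux1: "(x::real) = (a - b - c) / 2 \<Longrightarrow> 0 \<le> x \<Longrightarrow> 0 \<le> c \<Longrightarrow> b \<le> a" by (simp add: field_simps)
lemma aux2: "(x::real) = (a - b - c) / 2 \<Longrightarrow> x = (b + c - d) / 2 \<Longrightarrow> 0 \<le> x \<Longrightarrow> d \<le> a" by (simp add: field_simps)

lemma aux3: "(u::'a::real_vector) = a + z + c \<Longrightarrow> 2 *\<^sub>R (a + z) = (u + a) + (z - c)"
  by (simp add: algebra_simps scaleR_2)

lemma phi_norm:
  fixes T :: "'a::real_inner \<Rightarrow> 'a"
  assumes "inner (T u) u \<ge> 0" "\<tau> > 0"
  shows "norm u \<le> norm (u + \<tau> *\<^sub>R T u)" "norm (u - \<tau> *\<^sub>R T u) \<le> norm (u + \<tau> *\<^sub>R T u)"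
proof -
  have e1: "inner u (\<tau> *\<^sub>R T u) = ((norm (u + \<tau> *\<^sub>R T u))\<^sup>2 - (norm u)\<^sup>2 - (norm (\<tau> *\<^sub>R T u))\<^sup>2) / 2"
    by (rule dot_norm)
  have e2: "inner u (\<tau> *\<^sub>R T u) = ((norm u)\<^sup>2 + (norm (\<tau> *\<^sub>R T u))\<^sup>2 - (norm (u - \<tau> *\<^sub>R T u))\<^sup>2) / 2"
    by (rule dot_norm_neg)
  have e3: "inner u (\<tau> *\<^sub>R T u) = \<tau> * inner (T u) u" by (simp add: inner_commute)
  have p0: "0 \<le> \<tau> * inner (T u) u" using assms by simp
  have p: "0 \<le> inner u (\<tau> *\<^sub>R T u)" using p0 by (simp add: inner_commute[of u])
  have "(norm u)\<^sup>2 \<le> (norm (u + \<tau> *\<^sub>R T u))\<^sup>2" by (rule aux1[OF e1 p zero_le_power2])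
  thus "norm u \<le> norm (u + \<tau> *\<^sub>R T u)" by (rule power2_le_imp_le) simp
  have "(norm (u - \<tau> *\<^sub>R T u))\<^sup>2 \<le> (norm (u + \<tau> *\<^sub>R T u))\<^sup>2" by (rule aux2[OF e1 e2 p])
  thus "norm (u - \<tau> *\<^sub>R T u) \<le> norm (u + \<tau> *\<^sub>R T u)" by (rule power2_le_imp_le) simp
qed

lemma resolvent:
  fixes V :: "'a::real_inner set"
  assumes sub: "subspace V" and fin: "finite B0" "span B0 = V"
    and lin: "lin_on V T" and mono: "\<forall>v\<in>V. inner (T v) v \<ge> 0" and tau: "\<tau> > 0"
  shows "\<forall>u\<in>V. shifted_inv V \<tau> T (u + \<tau> *\<^sub>R T u) = u"
    and "\<forall>w\<in>V. shifted_inv V \<tau> T w \<in> V \<and> shifted_inv V \<tau> T w + \<tau> *\<^sub>R T (shifted_inv V \<tau> T w) = w"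
proof -
  let ?f = "\<lambda>v. v + \<tau> *\<^sub>R T v"
  have lo: "lin_op V T" "\<forall>v\<in>V. T v \<in> V" using lin unfolding lin_on_def by auto
  have linf: "lin_op V ?f" using lo(1) sub unfolding lin_op_def
    by (simp add: scaleR_add_right algebra_simps)
  have into: "\<forall>x\<in>V. ?f x \<in> V" using lo(2) sub by (simp add: subspace_add subspace_scale)
  have inj: "inj_on ?f V"
  proof (rule inj_onI)
    fix x y assume xy: "x \<in> V" "y \<in> V" "?f x = ?f y"
    have d: "x - y \<in> V" using xy sub subspace_diff by blast
    have td: "T (x - y) = T x - T y"
    proof -
      have "T (x + (-1) *\<^sub>R y) = T x + T ((-1) *\<^sub>R y)" using lo(1) xy sub unfolding lin_op_def
        by (meson subspace_scale)
      moreover have "T ((-1) *\<^sub>R y) = (-1) *\<^sub>R T y" using lo(1) xy unfolding lin_op_def by blast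
      ultimately have "T x = T y + T (x - y)" by simp
      thus ?thesis by simp
    qed
    have "?f (x - y) = ?f x - ?f y" unfolding td by (simp add: algebra_simps scaleR_diff_right)
    hence "?f (x - y) = 0" using xy(3) by simp
    hence "norm (x - y) \<le> 0" using phi_norm(1)[of T "x - y" \<tau>] mono d tau by simp
    thus "x = y" by simp
  qed
  have surj: "?f ` V = V" by (rule surj_lin[OF sub fin linf into inj])
  show "\<forall>u\<in>V. shifted_inv V \<tau> T (u + \<tau> *\<^sub>R T u) = u"
    unfolding shifted_inv_def using the_inv_into_f_f[OF inj] by blast
  show "\<forall>w\<in>V. shifted_inv V \<tau> T w \<in> V \<and> shifted_inv V \<tau> T w + \<tau> *\<^sub>R T (shifted_inv V \<tau> T w) = w"
    unfolding shifted_inv_def using the_inv_into_into[OF inj] f_the_inv_into_f[OF inj] surj by auto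
qed

theorem lemma4p2:
  fixes D D1 D2 :: "'a::{real_inner,complete_space} set"
    and A A1 A2 :: "'a \<Rightarrow> 'a"
    and I :: "real set" and V :: "real \<Rightarrow> 'a set" and P :: "real \<Rightarrow> 'a \<Rightarrow> 'a"
    and ip :: "real \<Rightarrow> 'a \<Rightarrow> 'a \<Rightarrow> real"
    and Ah Ah1 Ah2 :: "real \<Rightarrow> 'a \<Rightarrow> 'a"
    and h \<tau> :: real and n :: nat
  assumes "condA D A D1 A1 D2 A2"
    and "condP I D A V P"
    and "condAh I D A D1 A1 D2 A2 V P ip Ah Ah1 Ah2"
    and "h \<in> I" and "\<tau> > 0"
  shows "\<forall>v\<in>V h. norm ((S_op (V h) \<tau> (Ah1 h) (Ah2 h) ^^ n) (shifted_inv (V h) \<tau> (Ah2 h) v))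
                   \<le> norm v"
proof -
  define W where "W = V h"
  define T1 where "T1 = Ah1 h"
  define T2 where "T2 = Ah2 h"
  define R1 where "R1 = shifted_inv W \<tau> T1"
  define R2 where "R2 = shifted_inv W \<tau> T2"
  define S where "S = S_op W \<tau> T1 T2"
  have tau: "\<tau> > 0" by fact
  have sub: "subspace W" and "\<exists>B. finite B \<and> span B = W"
    using assms(2,4) unfolding condP_def W_def by auto
  then obtain B0 where fin: "finite B0" "span B0 = W" by blast
  have l1: "lin_on W T1" and l2: "lin_on W T2"
    using assms(3,4) unfolding condAh_def W_def T1_def T2_def by auto
  have m1: "\<forall>v\<in>W. inner (T1 v) v \<ge> 0" and m2: "\<forall>v\<in>W. inner (T2 v) v \<ge> 0"
    using assms(3,4) unfolding condAh_def W_def T1_def T2_def by auto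
  note r1 = resolvent[OF sub fin l1 m1 tau, folded R1_def]
  note r2 = resolvent[OF sub fin l2 m2 tau, folded R2_def]
  have T1in: "\<forall>v\<in>W. T1 v \<in> W" and T2in: "\<forall>v\<in>W. T2 v \<in> W"
    using l1 l2 unfolding lin_on_def by auto
  have T1add: "\<And>a b. a \<in> W \<Longrightarrow> b \<in> W \<Longrightarrow> T1 (a + b) = T1 a + T1 b"
    and T1sc: "\<And>c a. a \<in> W \<Longrightarrow> T1 (c *\<^sub>R a) = c *\<^sub>R T1 a"
    using l1 unfolding lin_on_def lin_op_def by auto
  have key: "\<exists>y\<in>W. norm y \<le> norm w \<and> S (R2 w) = R2 y" if w: "w \<in> W" for w
  proof -
    define u where "u = R2 w"
    have u: "u \<in> W" "u + \<tau> *\<^sub>R T2 u = w" using r2(2) w unfolding u_def by auto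
    have t2u: "T2 u \<in> W" using T2in u by auto
    define x where "x = u - \<tau> *\<^sub>R T2 u"
    have x: "x \<in> W" unfolding x_def using u t2u sub by (simp add: subspace_diff subspace_scale)
    define z where "z = R1 x"
    have z: "z \<in> W" "z + \<tau> *\<^sub>R T1 z = x" using r1(2) x unfolding z_def by auto
    define y where "y = \<tau> *\<^sub>R T2 u + z"
    have tu: "\<tau> *\<^sub>R T2 u \<in> W" using t2u sub by (simp add: subspace_scale)
    have y: "y \<in> W" unfolding y_def using tu z sub by (simp add: subspace_add)
    have "T1 y = \<tau> *\<^sub>R T1 (T2 u) + T1 z" unfolding y_def using T1add[OF tu z(1)] T1sc[OF t2u] by simp
    hence "y + \<tau> *\<^sub>R T1 y = \<tau> *\<^sub>R T2 u + (z + \<tau> *\<^sub>R T1 z) + \<tau>\<^sup>2 *\<^sub>R T1 (T2 u)"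
      unfolding y_def by (simp add: algebra_simps power2_eq_square)
    also have "\<dots> = u + \<tau>\<^sup>2 *\<^sub>R T1 (T2 u)" using z(2) unfolding x_def by simp
    finally have "R1 (u + \<tau>\<^sup>2 *\<^sub>R T1 (T2 u)) = y" using r1(1) y by metis
    hence Sy: "S (R2 w) = R2 y" unfolding S_def S_op_def R1_def[symmetric] R2_def[symmetric] u_def[symmetric] by simp
    have n1: "norm (z - \<tau> *\<^sub>R T1 z) \<le> norm x" using phi_norm(2)[of T1 z \<tau>] m1 z tau by simp
    have n2: "norm x \<le> norm w" using phi_norm(2)[of T2 u \<tau>] m2 u tau unfolding x_def by simp
    have "2 *\<^sub>R y = w + (z - \<tau> *\<^sub>R T1 z)"
    proof -
      have "u = \<tau> *\<^sub>R T2 u + z + \<tau> *\<^sub>R T1 z" using z(2) unfolding x_def by (simp add: algebra_simps)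
      from aux3[OF this] show ?thesis unfolding y_def u(2) .
    qed
    hence "norm (2 *\<^sub>R y) \<le> norm w + norm (z - \<tau> *\<^sub>R T1 z)" by (metis norm_triangle_ineq)
    hence "2 * norm y \<le> 2 * norm w" using n1 n2 by simp
    hence "norm y \<le> norm w" by simp
    thus ?thesis using y Sy by blast
  qed
  have ind: "\<forall>v\<in>W. \<exists>w\<in>W. norm w \<le> norm v \<and> (S ^^ k) (R2 v) = R2 w" for k
  proof (induction k)
    case 0
    then show ?case by auto
  next
    case (Suc k)
    show ?case
    proof
      fix v assume v: "v \<in> W"
      obtain w where w: "w \<in> W" "norm w \<le> norm v" "(S ^^ k) (R2 v) = R2 w" using Suc v by blast
      obtain y where y: "y \<in> W" "norm y \<le> norm w" "S (R2 w) = R2 y" using key[OF w(1)] by blast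
      have "(S ^^ Suc k) (R2 v) = R2 y" using w(3) y(3) by simp
      thus "\<exists>w\<in>W. norm w \<le> norm v \<and> (S ^^ Suc k) (R2 v) = R2 w" using y w(2) order_trans by blast
    qed
  qed
  show ?thesis
  proof
    fix v assume v: "v \<in> V h"
    obtain w where w: "w \<in> W" "norm w \<le> norm v" "(S ^^ n) (R2 v) = R2 w"
      using ind[of n] v unfolding W_def by blast
    have "R2 w \<in> W" "R2 w + \<tau> *\<^sub>R T2 (R2 w) = w" using r2(2) w(1) by auto
    hence "norm (R2 w) \<le> norm w" using phi_norm(1)[of T2 "R2 w" \<tau>] m2 tau by simp
    thus "norm ((S_op (V h) \<tau> (Ah1 h) (Ah2 h) ^^ n) (shifted_inv (V h) \<tau> (Ah2 h) v)) \<le> norm v"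
      using w unfolding S_def R2_def W_def T1_def T2_def by simp
  qed
qed
end
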